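(* The scheme-theoretic image of the morphism $\pi:\mathscr E\to\mathscr L$ coincides with the variety of X-states $\mathscr X$.
   Context: Let $V_1,\dots,V_n$ be two-dimensional complex vector spaces, $\mathscr V_i=\mathfrak{sl}(V_i)$ with form $\langle A,B\rangle=\tfrac12\operatorname{tr}(AB)$, $\mathscr L$ the affine space of trace-one endomorphisms of $V_1\otimes\cdots\otimes V_n$, identified (Bloch model) with $\bigoplus_{\emptyset\ne I\subseteq\{1,\dots,n\}}\mathscr V_I$, $\mathscr V_I=\bigotimes_{i\in I}\mathscr V_i$, via $\rho=2^{-n}\mathrm{id}+\sum_I\rho_I$ (with $\mathscr V_I$ embedded in $\mathrm{End}(V_1\otimes\cdots\otimes V_n)$ by tensoring with identities). An X-state is a $\rho\in\mathscr L$ which for some ordered bases $\{e^i_0,e^i_1\}$ of the $V_i$ preserves the span of basis tensors $e^1_{\phi(1)}\otimes\cdots\otimes e^n_{\phi(n)}$ with $\sum\phi(i)$ even and the span of those with $\sum\phi(i)$ odd; $\mathscr X$ is the Zariski closure in $\mathscr L$ of the set of X-states with reduced structure. Let $\breve{\mathbb P}(\mathscr V_i)\subseteq\mathbb P(\mathscr V_i)$ be the open set of lines spanned by $v$ with $\langle v,v\rangle\neq0$, and $\breve P=\prod_i\breve{\mathbb P}(\mathscr V_i)$. For $\mathfrak B=(\mathscr V_1^\ell,\dots,\mathscr V_n^\ell)\in\breve P$ let $\mathscr V_i^t=(\mathscr V_i^\ell)^\perp$, let $\mathscr V_I^e$ be spanned by tensors $\bigotimes_{i\in I}x_i$ with each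 $x_i\in\mathscr V_i^\ell$ or $x_i\in\mathscr V_i^t$ and an even number transversal, and $X(\mathfrak B)=\bigoplus_{\emptyset\ne I}\mathscr V_I^e$. Let $\mathscr E\to\breve P$ be the vector bundle (a subbundle of the trivial bundle $\breve P\times\mathscr L$, namely the direct sum over pairs of disjoint $I,J$ with $I\cup J\ne\emptyset$, $|J|$ even, of the bundles with fibers $\bigotimes_{i\in I}\mathscr V_i^\ell\otimes\bigotimes_{j\in J}\mathscr V_j^t$) whose fiber over $\mathfrak B$ is $X(\mathfrak B)$, and $\pi:\mathscr E\to\mathscr L$ the morphism restricting on each fiber to the inclusion $X(\mathfrak B)\subseteq\mathscr L$. *)

theory Defs
  imports Complex_Main
begin

text \<open>V_i = C^2 with coordinates indexed by bool (False = 0, True = 1).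
  2x2 matrices are functions bool => bool => complex (row, column).
  V_1 (x) ... (x) V_n = C^(2^n); the basis index k < 2^n corresponds to the
  multi-index phi with phi(i) = bit k i (factor i is bit i).
  Vectors of C^(2^n) are nat => complex, endomorphisms are nat => nat => complex,
  with all entries outside the index range {0..<2^n} equal to zero.\<close>

type_synonym cvec = "nat \<Rightarrow> complex"
type_synonym cmat = "nat \<Rightarrow> nat \<Rightarrow> complex"
type_synonym mat2 = "bool \<Rightarrow> bool \<Rightarrow> complex"

definition mulv :: "nat \<Rightarrow> cmat \<Rightarrow> cvec \<Rightarrow> cvec" where
  "mulv N A v = (\<lambda>r. if r < N then (\<Sum>k<N. A r k * v k) else 0)"

definition ctrace :: "nat \<Rightarrow> cmat \<Rightarrow> complex" where
  "ctrace N M = (\<Sum>k<N. M k k)"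

definition in_range :: "nat \<Rightarrow> cmat \<Rightarrow> bool" where
  "in_range N M \<longleftrightarrow> (\<forall>r c. (N \<le> r \<or> N \<le> c) \<longrightarrow> M r c = 0)"

definition idm :: "nat \<Rightarrow> cmat" where
  "idm N = (\<lambda>r c. if r < N \<and> c = r then 1 else 0)"

definition Lspace :: "nat \<Rightarrow> cmat set" where
  "Lspace n = {\<rho>. in_range (2^n) \<rho> \<and> ctrace (2^n) \<rho> = 1}"

definition cspan_v :: "cvec set \<Rightarrow> cvec set" where
  "cspan_v S = {w. \<exists>F c. finite F \<and> F \<subseteq> S \<and> w = (\<lambda>r. \<Sum>g\<in>F. c g * g r)}"

definition cspan_m :: "cmat set \<Rightarrow> cmat set" where
  "cspan_m S = {M. \<exists>F c. finite F \<and> F \<subseteq> S \<and> M = (\<lambda>r k. \<Sum>g\<in>F. c g * g r k)}"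

text \<open>An ordered basis of C^2: e False = e_0, e True = e_1 (each a vector indexed by bool),
  linearly independent (hence a basis of the 2-dimensional space).\<close>
definition basis2 :: "mat2 \<Rightarrow> bool" where
  "basis2 e \<longleftrightarrow> (\<forall>a b. (\<forall>x. a * e False x + b * e True x = 0) \<longrightarrow> a = 0 \<and> b = 0)"

text \<open>Basis tensor e^1_{phi(1)} (x) ... (x) e^n_{phi(n)}, phi(i) = bit j i.\<close>
definition btensor :: "nat \<Rightarrow> (nat \<Rightarrow> mat2) \<Rightarrow> nat \<Rightarrow> cvec" where
  "btensor n e j = (\<lambda>k. if k < 2^n then (\<Prod>i<n. e i (bit j i) (bit k i)) else 0)"

definition par :: "nat \<Rightarrow> nat \<Rightarrow> bool" where
  "par n j = even (card {i. i < n \<and> bit j i})"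

definition Xstate :: "nat \<Rightarrow> cmat \<Rightarrow> bool" where
  "Xstate n \<rho> \<longleftrightarrow> \<rho> \<in> Lspace n \<and>
     (\<exists>e. (\<forall>i<n. basis2 (e i)) \<and>
        (\<forall>p. \<forall>w \<in> cspan_v {btensor n e j | j. j < 2^n \<and> par n j = p}.
             mulv (2^n) \<rho> w \<in> cspan_v {btensor n e j | j. j < 2^n \<and> par n j = p}))"

definition tr2 :: "mat2 \<Rightarrow> complex" where
  "tr2 A = A False False + A True True"

definition sl2 :: "mat2 set" where
  "sl2 = {A. tr2 A = 0}"

definition form2 :: "mat2 \<Rightarrow> mat2 \<Rightarrow> complex" where
  "form2 A B = (\<Sum>a\<in>UNIV. \<Sum>b\<in>UNIV. A a b * B b a) / 2"

text \<open>A point B of breve P is given by spanning vectors v i of the lines V_i^l,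
  with v i in sl(V_i) and <v i, v i> \<noteq> 0.\<close>
definition frame :: "nat \<Rightarrow> (nat \<Rightarrow> mat2) \<Rightarrow> bool" where
  "frame n v \<longleftrightarrow> (\<forall>i<n. v i \<in> sl2 \<and> form2 (v i) (v i) \<noteq> 0)"

definition Vl :: "mat2 \<Rightarrow> mat2 set" where
  "Vl v = {(\<lambda>a b. c * v a b) | c. True}"

definition Vt :: "mat2 \<Rightarrow> mat2 set" where
  "Vt v = {x \<in> sl2. form2 x (v) = 0}"

text \<open>Embedding of a tensor (x) x_i (i in I) into End(C^(2^n)) by tensoring
  with identities on the factors outside I.\<close>
definition embed :: "nat \<Rightarrow> nat set \<Rightarrow> (nat \<Rightarrow> mat2) \<Rightarrow> cmat" where
  "embed n I x = (\<lambda>r c. if r < 2^n \<and> c < 2^n then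
      (\<Prod>i<n. if i \<in> I then x i (bit r i) (bit c i)
               else (if bit r i = bit c i then 1 else 0)) else 0)"

text \<open>X(B) = direct sum over nonempty I of V_I^e, as a subspace of End.\<close>
definition XB :: "nat \<Rightarrow> (nat \<Rightarrow> mat2) \<Rightarrow> cmat set" where
  "XB n v = cspan_m {embed n I x | I x. I \<subseteq> {..<n} \<and> I \<noteq> {} \<and>
      (\<exists>\<tau>. even (card {i\<in>I. \<tau> i}) \<and>
           (\<forall>i\<in>I. x i \<in> (if \<tau> i then Vt (v i) else Vl (v i))))}"

text \<open>Bloch identification: rho = 2^-n id + sum_I rho_I.\<close>
definition bloch :: "nat \<Rightarrow> cmat \<Rightarrow> cmat" where
  "bloch n x = (\<lambda>r c. idm (2^n) r c / 2^n + x r c)"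

text \<open>Set-theoretic image of pi : E -> L.\<close>
definition pi_image :: "nat \<Rightarrow> cmat set" where
  "pi_image n = {bloch n x | v x. frame n v \<and> x \<in> XB n v}"

inductive_set polyfun :: "nat \<Rightarrow> (cmat \<Rightarrow> complex) set" for N :: nat where
  const: "(\<lambda>M. a) \<in> polyfun N"
| coord: "r < N \<Longrightarrow> c < N \<Longrightarrow> (\<lambda>M. M r c) \<in> polyfun N"
| add: "p \<in> polyfun N \<Longrightarrow> q \<in> polyfun N \<Longrightarrow> (\<lambda>M. p M + q M) \<in> polyfun N"
| mult: "p \<in> polyfun N \<Longrightarrow> q \<in> polyfun N \<Longrightarrow> (\<lambda>M. p M * q M) \<in> polyfun N"

definition vanishing_ideal :: "nat \<Rightarrow> cmat set \<Rightarrow> (cmat \<Rightarrow> complex) set" where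
  "vanishing_ideal N S = {p \<in> polyfun N. \<forall>M\<in>S. p M = 0}"

end

theory Submission
  imports Defs
begin


definition id2 :: mat2 where "id2 = (\<lambda>a b. if a = b then 1 else 0)"
definition mv2 :: "mat2 \<Rightarrow> (bool \<Rightarrow> complex) \<Rightarrow> (bool \<Rightarrow> complex)" where
  "mv2 y w = (\<lambda>b. y b False * w False + y b True * w True)"
definition det2 :: "mat2 \<Rightarrow> complex" where
  "det2 e = e False False * e True True - e False True * e True False"
definition dualk :: "mat2 \<Rightarrow> complex \<Rightarrow> mat2" where
  "dualk e k = (\<lambda>a c. (if a then (if c then e False False else - e False True)
                      else (if c then - e True False else e True True)) * k)"
definition dual :: "mat2 \<Rightarrow> mat2" where
  "dual e = dualk e (inverse (det2 e))"
definition vBd :: "mat2 \<Rightarrow> mat2 \<Rightarrow> mat2" where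
  "vBd e f = (\<lambda>r c. e False r * f False c - e True r * f True c)"
definition vB :: "mat2 \<Rightarrow> mat2" where
  "vB e = vBd e (dual e)"
definition E2 :: "mat2 \<Rightarrow> bool \<Rightarrow> bool \<Rightarrow> mat2" where
  "E2 e a b = (\<lambda>r c. e a r * dual e b c)"

lemma sumB: "(\<Sum>x\<in>UNIV. f x) = f False + f (True::bool)"
  by (simp add: UNIV_bool)

lemma basis2_det: "basis2 e \<longleftrightarrow> det2 e \<noteq> 0"
proof
  assume b: "basis2 e"
  show "det2 e \<noteq> 0"
  proof
    assume d: "det2 e = 0"
    show False
    proof (cases "e True True = 0 \<and> e False True = 0")
      case False
      have "e True True * e False x + (- e False True) * e True x = 0" for x
        using d by (cases x) (simp_all add: det2_def algebra_simps)
      then have "e True True = 0 \<and> - e False True = 0" using b unfolding basis2_def by blast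
      then show False using False by simp
    next
      case T1: True
      show False
      proof (cases "e True False = 0 \<and> e False False = 0")
        case False
        have "e True False * e False x + (- e False False) * e True x = 0" for x
          using d T1 by (cases x) (simp_all add: det2_def algebra_simps)
        then have "e True False = 0 \<and> - e False False = 0" using b unfolding basis2_def by blast
        then show False using False by simp
      next
        case True
        have "0 * e False x + 1 * e True x = 0" for x
          using T1 True by (cases x) simp_all
        then have "(0::complex) = 0 \<and> (1::complex) = 0" using b unfolding basis2_def by blast
        then show False by simp
      qed
    qed
  qed
next
  assume d: "det2 e \<noteq> 0"
  show "basis2 e" unfolding basis2_def
  proof (intro allI impI)
    fix a b assume h: "\<forall>x. a * e False x + b * e True x = 0"
    have h1: "a * e False False + b * e True False = 0" and h2: "a * e False True + b * e True True = 0"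
      using h by auto
    have "a * det2 e = (a * e False False + b * e True False) * e True True - (a * e False True + b * e True True) * e True False"
      by (simp add: det2_def algebra_simps)
    then have "a * det2 e = 0" using h1 h2 by simp
    moreover have "b * det2 e = (a * e False True + b * e True True) * e False False - (a * e False False + b * e True False) * e False True"
      by (simp add: det2_def algebra_simps)
    then have "b * det2 e = 0" using h1 h2 by simp
    ultimately show "a = 0 \<and> b = 0" using d by simp
  qed
qed

lemma dual_inst: assumes "det2 e \<noteq> 0"
  shows "(\<And>k. k * (e False False * e True True - e False True * e True False) = 1 \<Longrightarrow> P (dualk e k)) \<Longrightarrow> P (dual e)"
  using assms unfolding dual_def det2_def by simp

lemma biorth: "det2 e \<noteq> 0 \<Longrightarrow> dual e a False * e b False + dual e a True * e b True = (if a = b then 1 else 0)"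
  by (erule dual_inst[where P="\<lambda>f. f a False * e b False + f a True * e b True = (if a = b then 1 else 0)"],
      cases a; cases b) (simp add: dualk_def; algebra)+

lemma compl: "det2 e \<noteq> 0 \<Longrightarrow> e False r * dual e False c + e True r * dual e True c = id2 r c"
  by (erule dual_inst[where P="\<lambda>f. e False r * f False c + e True r * f True c = id2 r c"],
      cases r; cases c) (simp add: dualk_def id2_def; algebra)+

lemma vB_sl2: "det2 e \<noteq> 0 \<Longrightarrow> vB e \<in> sl2"
  unfolding vB_def
  by (erule dual_inst[where P="\<lambda>f. vBd e f \<in> sl2"]) (simp add: sl2_def tr2_def vBd_def dualk_def; algebra)

lemma vB_form: "det2 e \<noteq> 0 \<Longrightarrow> form2 (vB e) (vB e) = 1"
  unfolding vB_def
  by (erule dual_inst[where P="\<lambda>f. form2 (vBd e f) (vBd e f) = 1"]) (simp add: form2_def sumB vBd_def dualk_def; algebra)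

lemma vB_eig: "det2 e \<noteq> 0 \<Longrightarrow> mv2 (vB e) (e a) = (\<lambda>b. (if a then -1 else 1) * e a b)"
  unfolding vB_def
  by (erule dual_inst[where P="\<lambda>f. mv2 (vBd e f) (e a) = (\<lambda>b. (if a then -1 else 1) * e a b)"], cases a)
    (simp add: fun_eq_iff mv2_def vBd_def dualk_def all_bool_eq; algebra)+

lemma E2_diag: "det2 e \<noteq> 0 \<Longrightarrow> E2 e a a = (\<lambda>r c. (id2 r c + (if a then -1 else 1) * vB e r c) / 2)"
  unfolding vB_def E2_def
  by (erule dual_inst[where P="\<lambda>f. (\<lambda>r c. e a r * f a c) = (\<lambda>r c. (id2 r c + (if a then -1 else 1) * vBd e f r c) / 2)"], cases a)
   (simp add: fun_eq_iff vBd_def id2_def dualk_def all_bool_eq; algebra)+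

lemma E2_off_tr: "det2 e \<noteq> 0 \<Longrightarrow> a \<noteq> b \<Longrightarrow> tr2 (E2 e a b) = 0"
  using biorth[of e b a] by (simp add: tr2_def E2_def algebra_simps)

lemma E2_off_form: assumes d: "det2 e \<noteq> 0" and ab: "a \<noteq> b" shows "form2 (E2 e a b) (vB e) = 0"
proof -
  let ?f = "dual e"
  have "form2 (E2 e a b) (vB e) = ((?f b False * e False False + ?f b True * e False True) * (?f False False * e a False + ?f False True * e a True)
     - (?f b False * e True False + ?f b True * e True True) * (?f True False * e a False + ?f True True * e a True)) / 2"
    by (simp add: form2_def sumB E2_def vB_def vBd_def algebra_simps)
  also have "\<dots> = 0" using biorth[OF d] ab by (cases a; cases b) simp_all
  finally show ?thesis .
qed

lemma E2_off: "det2 e \<noteq> 0 \<Longrightarrow> a \<noteq> b \<Longrightarrow> E2 e a b \<in> Vt (vB e)"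
  using E2_off_tr E2_off_form by (simp add: Vt_def sl2_def)
lemma expand_vec: assumes d: "det2 e \<noteq> 0"
  shows "w b = (dual e False False * w False + dual e False True * w True) * e False b
             + (dual e True False * w False + dual e True True * w True) * e True b"
proof -
  have "(dual e False False * w False + dual e False True * w True) * e False b
             + (dual e True False * w False + dual e True True * w True) * e True b
      = w False * (e False b * dual e False False + e True b * dual e True False)
      + w True * (e False b * dual e False True + e True b * dual e True True)"
    by (simp add: algebra_simps)
  also have "\<dots> = w b" using compl[OF d, of b] by (cases b) (simp_all add: id2_def)
  finally show ?thesis by simp
qed

definition yhat :: "mat2 \<Rightarrow> mat2 \<Rightarrow> bool \<Rightarrow> complex" where
  "yhat e y c = dual e c False * mv2 y (e c) False + dual e c True * mv2 y (e c) True"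

lemma yhat_tr: assumes d: "det2 e \<noteq> 0" shows "tr2 y = yhat e y False + yhat e y True"
proof -
  have "yhat e y False + yhat e y True =
     y False False * (e False False * dual e False False + e True False * dual e True False)
   + y False True * (e False True * dual e False False + e True True * dual e True False)
   + y True False * (e False False * dual e False True + e True False * dual e True True)
   + y True True * (e False True * dual e False True + e True True * dual e True True)"
    by (simp add: yhat_def mv2_def algebra_simps)
  also have "\<dots> = tr2 y" using compl[OF d] by (simp add: id2_def tr2_def)
  finally show ?thesis by simp
qed

lemma yhat_form: "2 * form2 y (vB e) = yhat e y False - yhat e y True"
  by (simp add: yhat_def mv2_def form2_def sumB vB_def vBd_def field_simps)

lemma Vt_vB: assumes d: "det2 e \<noteq> 0" and y: "y \<in> Vt (vB e)"
  shows "\<exists>\<kappa>. mv2 y (e a) = (\<lambda>b. \<kappa> * e (\<not>a) b)"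
proof -
  have "tr2 y = 0" "form2 y (vB e) = 0" using y by (auto simp: Vt_def sl2_def)
  then have z: "yhat e y False = 0" "yhat e y True = 0"
    using yhat_tr[OF d, of y] yhat_form[of y e] by (auto simp: algebra_simps)
  let ?w = "mv2 y (e a)"
  have "?w = (\<lambda>b. (dual e (\<not>a) False * ?w False + dual e (\<not>a) True * ?w True) * e (\<not>a) b)"
  proof
    fix b
    show "?w b = (dual e (\<not>a) False * ?w False + dual e (\<not>a) True * ?w True) * e (\<not>a) b"
      using expand_vec[OF d, of ?w b] z by (cases a) (simp_all add: yhat_def)
  qed
  then show ?thesis by blast
qed
lemma null2: assumes "M False False * M True True - M False True * M True False = 0"
  shows "\<exists>w. (w False \<noteq> 0 \<or> w True \<noteq> 0) \<and> mv2 M w = (\<lambda>_. 0)"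
proof (cases "M False False \<noteq> 0 \<or> M False True \<noteq> 0")
  case True
  let ?w = "\<lambda>b. if b then - M False False else M False True"
  have "mv2 M ?w = (\<lambda>_. 0)" using assms by (auto simp: fun_eq_iff mv2_def all_bool_eq algebra_simps)
  then show ?thesis using True by (intro exI[of _ ?w]) auto
next
  case F1: False
  show ?thesis
  proof (cases "M True False \<noteq> 0 \<or> M True True \<noteq> 0")
    case True
    let ?w = "\<lambda>b. if b then - M True False else M True True"
    have "mv2 M ?w = (\<lambda>_. 0)" using assms by (auto simp: fun_eq_iff mv2_def all_bool_eq algebra_simps)
    then show ?thesis using True by (intro exI[of _ ?w]) auto
  next
    case False
    let ?w = "\<lambda>b::bool. if b then 0 else (1::complex)"
    have "mv2 M ?w = (\<lambda>_. 0)" using F1 False by (auto simp: fun_eq_iff mv2_def all_bool_eq)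
    then show ?thesis by (intro exI[of _ ?w]) auto
  qed
qed

lemma eigvec: assumes "v True True = - v False False"
  and "\<mu> * \<mu> = v False False * v False False + v False True * v True False"
  shows "\<exists>w. (w False \<noteq> 0 \<or> w True \<noteq> 0) \<and> mv2 v w = (\<lambda>b. \<mu> * w b)"
proof -
  define M where "M = (\<lambda>r c. v r c - \<mu> * id2 r c)"
  have "M False False * M True True - M False True * M True False = 0"
    using assms by (simp add: M_def id2_def algebra_simps)
  then obtain w where w: "w False \<noteq> 0 \<or> w True \<noteq> 0" "mv2 M w = (\<lambda>_. 0)" using null2[of M] by blast
  have "mv2 v w = (\<lambda>b. \<mu> * w b)"
  proof
    fix b
    have "mv2 M w b = 0" using w(2) by simp
    then show "mv2 v w b = \<mu> * w b" by (cases b) (simp_all add: M_def mv2_def id2_def algebra_simps)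
  qed
  then show ?thesis using w(1) by blast
qed

lemma eigbasis: assumes v: "v \<in> sl2" and q: "form2 v v \<noteq> 0"
  shows "\<exists>e \<mu>. det2 e \<noteq> 0 \<and> \<mu> \<noteq> 0 \<and> v = (\<lambda>r c. \<mu> * vB e r c)"
proof -
  have vTT: "v True True = - v False False" using v by (simp add: sl2_def tr2_def add_eq_0_iff)
  have fq: "form2 v v = v False False * v False False + v False True * v True False"
    using vTT by (simp add: form2_def sumB field_simps)
  define \<mu> where "\<mu> = csqrt (form2 v v)"
  have mu2: "\<mu> * \<mu> = v False False * v False False + v False True * v True False"
    using fq by (simp add: \<mu>_def power2_eq_square[symmetric])
  have mu0: "\<mu> \<noteq> 0" using q by (simp add: \<mu>_def)
  obtain w1 where w1: "w1 False \<noteq> 0 \<or> w1 True \<noteq> 0" "mv2 v w1 = (\<lambda>b. \<mu> * w1 b)"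
    using eigvec[of v \<mu>, OF vTT mu2] by blast
  obtain w2 where w2: "w2 False \<noteq> 0 \<or> w2 True \<noteq> 0" "mv2 v w2 = (\<lambda>b. (-\<mu>) * w2 b)"
    using eigvec[of v "-\<mu>", OF vTT] mu2 by auto
  define e where "e = (\<lambda>a. if a then w2 else w1)"
  have ev: "mv2 v (e a) = (\<lambda>b. (if a then -\<mu> else \<mu>) * e a b)" for a
    using w1 w2 by (cases a) (simp_all add: e_def)
  have "basis2 e" unfolding basis2_def
  proof (intro allI impI)
    fix \<alpha> \<beta> assume h: "\<forall>x. \<alpha> * e False x + \<beta> * e True x = 0"
    have h2: "\<alpha> * \<mu> * e False x - \<beta> * \<mu> * e True x = 0" for x
    proof -
      have "mv2 v (\<lambda>x. \<alpha> * e False x + \<beta> * e True x) x = 0" using h by (simp add: mv2_def)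
      moreover have "mv2 v (\<lambda>x. \<alpha> * e False x + \<beta> * e True x) x
          = \<alpha> * mv2 v (e False) x + \<beta> * mv2 v (e True) x" by (simp add: mv2_def algebra_simps)
      ultimately show ?thesis using ev[of False] ev[of True] by (simp add: algebra_simps)
    qed
    have "2 * \<mu> * (\<alpha> * e False x) = 0" for x
    proof -
      have "2 * \<mu> * (\<alpha> * e False x) = (\<alpha> * \<mu> * e False x - \<beta> * \<mu> * e True x) + \<mu> * (\<alpha> * e False x + \<beta> * e True x)"
        by (simp add: algebra_simps)
      then show ?thesis using h2[of x] h by simp
    qed
    then have a0: "\<alpha> = 0" using mu0 w1(1) by (auto simp: e_def)
    have "2 * \<mu> * (\<beta> * e True x) = 0" for x
    proof -
      have "2 * \<mu> * (\<beta> * e True x) = \<mu> * (\<alpha> * e False x + \<beta> * e True x) - (\<alpha> * \<mu> * e False x - \<beta> * \<mu> * e True x)"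
        by (simp add: algebra_simps)
      then show ?thesis using h2[of x] h by simp
    qed
    then have "\<beta> = 0" using mu0 w2(1) by (auto simp: e_def)
    then show "\<alpha> = 0 \<and> \<beta> = 0" using a0 by simp
  qed
  then have d: "det2 e \<noteq> 0" by (simp add: basis2_det)
  have "v = (\<lambda>r c. \<mu> * vB e r c)"
  proof (intro ext)
    fix r c
    have "v r c = mv2 v (e False) r * dual e False c + mv2 v (e True) r * dual e True c"
    proof -
      have "mv2 v (e False) r * dual e False c + mv2 v (e True) r * dual e True c
          = v r False * (e False False * dual e False c + e True False * dual e True c)
          + v r True * (e False True * dual e False c + e True True * dual e True c)"
        by (simp add: mv2_def algebra_simps)
      also have "\<dots> = v r c" using compl[OF d] by (cases c) (simp_all add: id2_def)
      finally show ?thesis by simp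
    qed
    also have "\<dots> = \<mu> * vB e r c" using ev[of False] ev[of True]
      by (simp add: vB_def vBd_def algebra_simps)
    finally show "v r c = \<mu> * vB e r c" .
  qed
  then show ?thesis using d mu0 by blast
qed


lemma sum_split2: "(\<Sum>k<2*M. F k) = (\<Sum>k<M. F (2*k) + F (2*k+1::nat))" for F :: "nat \<Rightarrow> 'a::comm_monoid_add"
  by (induction M) (simp_all add: add.assoc add.left_commute)

lemma sum_prod_bits: "(\<Sum>k::nat<2^n. \<Prod>i<n. g i (bit k i)) = (\<Prod>i<n. g i False + g i True)"
  for g :: "nat \<Rightarrow> bool \<Rightarrow> 'a::comm_semiring_1"
proof (induction n arbitrary: g)
  case 0 then show ?case by simp
next
  case (Suc n)
  have "(\<Sum>k::nat<2^Suc n. \<Prod>i<Suc n. g i (bit k i))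
     = (\<Sum>k::nat<2*2^n. g 0 (odd k) * (\<Prod>i<n. g (Suc i) (bit (k div 2) i)))"
    by (simp only: prod.lessThan_Suc_shift bit_Suc bit_0 power_Suc)
  also have "\<dots> = (\<Sum>k::nat<2^n. (g 0 False + g 0 True) * (\<Prod>i<n. g (Suc i) (bit k i)))"
    by (simp add: sum_split2 algebra_simps)
  also have "\<dots> = (g 0 False + g 0 True) * (\<Prod>i<n. g (Suc i) False + g (Suc i) True)"
    by (simp add: sum_distrib_left[symmetric] Suc[of "\<lambda>i. g (Suc i)"])
  finally show ?case by (simp only: prod.lessThan_Suc_shift)
qed

lemma bits_exist: "\<exists>j::nat. j<2^n \<and> (\<forall>i<n. bit j i = \<psi> i)"
proof (induction n arbitrary: \<psi>)
  case 0 then show ?case by auto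
next
  case (Suc n)
  obtain j :: nat where j: "j < 2^n" "\<forall>i<n. bit j i = \<psi> (Suc i)" using Suc[of "\<lambda>i. \<psi> (Suc i)"] by blast
  define j' where "j' = (if \<psi> 0 then 1 else 0) + 2 * j"
  have "j' < 2^Suc n" using j unfolding j'_def by simp
  moreover have "\<forall>i<Suc n. bit j' i = \<psi> i"
  proof (intro allI impI)
    fix i assume "i < Suc n"
    show "bit j' i = \<psi> i"
    proof (cases i)
      case 0 then show ?thesis unfolding j'_def by (simp add: bit_0)
    next
      case (Suc m)
      have "j' div 2 = j" unfolding j'_def by simp
      then show ?thesis using Suc j \<open>i < Suc n\<close> by (simp add: bit_Suc)
    qed
  qed
  ultimately show ?case by blast
qed

lemma bits_unique: "j < 2^n \<Longrightarrow> j' < 2^n \<Longrightarrow> \<forall>i<n. bit j i = bit j' i \<Longrightarrow> j = j'"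
  for j j' :: nat
  by (metis bit_eqI bit_take_bit_iff take_bit_nat_eq_self_iff)

definition tm :: "nat \<Rightarrow> (nat \<Rightarrow> mat2) \<Rightarrow> cmat" where
  "tm n A = (\<lambda>r c. if r < 2^n \<and> c < 2^n then (\<Prod>i<n. A i (bit r i) (bit c i)) else 0)"
definition tv :: "nat \<Rightarrow> (nat \<Rightarrow> bool \<Rightarrow> complex) \<Rightarrow> cvec" where
  "tv n w = (\<lambda>k. if k < 2^n then (\<Prod>i<n. w i (bit k i)) else 0)"

lemma embed_tm: "embed n I x = tm n (\<lambda>i. if i \<in> I then x i else id2)"
  unfolding embed_def tm_def id2_def by (intro ext) (auto intro!: prod.cong)

lemma btensor_tv: "btensor n e j = tv n (\<lambda>i. e i (bit j i))"
  unfolding btensor_def tv_def by simp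

lemma tm_cong: "(\<And>i. i < n \<Longrightarrow> A i = B i) \<Longrightarrow> tm n A = tm n B"
  unfolding tm_def by (intro ext) (auto intro!: prod.cong)

lemma tv_cong: "(\<And>i. i < n \<Longrightarrow> A i = B i) \<Longrightarrow> tv n A = tv n B"
  unfolding tv_def by (intro ext) (auto intro!: prod.cong)

lemma prod_id2_bits: "r < 2^n \<Longrightarrow> s < 2^n \<Longrightarrow> (\<Prod>i<n. id2 (bit r i) (bit s i)) = (if r = s then 1 else 0)"
  for r s :: nat
proof (cases "r = s")
  case True then show ?thesis by (simp add: id2_def)
next
  case False
  assume r: "r < 2^n" and s: "s < 2^n"
  then obtain i where "i < n" "bit r i \<noteq> bit s i" using bits_unique[OF r s] False by blast
  then show ?thesis using False by (auto simp: id2_def intro!: prod_zero)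
qed

lemma idm_tm: "idm (2^n) = tm n (\<lambda>_. id2)"
  unfolding idm_def tm_def by (intro ext) (auto simp: prod_id2_bits)

lemma mulv_tm_tv: "mulv (2^n) (tm n A) (tv n w) = tv n (\<lambda>i. mv2 (A i) (w i))"
proof (intro ext)
  fix r
  show "mulv (2^n) (tm n A) (tv n w) r = tv n (\<lambda>i. mv2 (A i) (w i)) r"
  proof (cases "r < 2^n")
    case True
    have "mulv (2^n) (tm n A) (tv n w) r = (\<Sum>k::nat<2^n. \<Prod>i<n. A i (bit r i) (bit k i) * w i (bit k i))"
      using True by (simp add: mulv_def tm_def tv_def prod.distrib)
    also have "\<dots> = (\<Prod>i<n. A i (bit r i) False * w i False + A i (bit r i) True * w i True)"
      by (rule sum_prod_bits)
    finally show ?thesis using True by (simp add: tv_def mv2_def)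
  qed (simp add: mulv_def tv_def)
qed

lemma ctrace_tm: "ctrace (2^n) (tm n A) = (\<Prod>i<n. tr2 (A i))"
proof -
  have "ctrace (2^n) (tm n A) = (\<Sum>k::nat<2^n. \<Prod>i<n. A i (bit k i) (bit k i))"
    by (simp add: ctrace_def tm_def)
  also have "\<dots> = (\<Prod>i<n. tr2 (A i))" unfolding tr2_def by (rule sum_prod_bits)
  finally show ?thesis .
qed

lemma tv_scale: "tv n (\<lambda>i b. \<kappa> i * w i b) = (\<lambda>k. (\<Prod>i<n. \<kappa> i) * tv n w k)"
  unfolding tv_def by (auto simp: prod.distrib)

lemma tm_factor_sum: assumes "m < n" "finite T"
  shows "tm n (y(m := (\<lambda>a b. \<Sum>t\<in>T. c t * B t a b))) = (\<lambda>r k. \<Sum>t\<in>T. c t * tm n (y(m := B t)) r k)"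
proof (intro ext)
  fix r k :: nat
  have mem: "m \<in> {..<n}" using assms by simp
  have *: "(\<Prod>i<n. (y(m := Z)) i (bit r i) (bit k i)) = Z (bit r m) (bit k m) * (\<Prod>i\<in>{..<n}-{m}. y i (bit r i) (bit k i))" for Z
  proof -
    have "(\<Prod>i<n. (y(m := Z)) i (bit r i) (bit k i)) = Z (bit r m) (bit k m) * (\<Prod>i\<in>{..<n}-{m}. (y(m := Z)) i (bit r i) (bit k i))"
      using prod.remove[OF _ mem, of "\<lambda>i. (y(m := Z)) i (bit r i) (bit k i)"] by simp
    moreover have "(\<Prod>i\<in>{..<n}-{m}. (y(m := Z)) i (bit r i) (bit k i)) = (\<Prod>i\<in>{..<n}-{m}. y i (bit r i) (bit k i))"
      by (rule prod.cong) auto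
    ultimately show ?thesis by simp
  qed
  show "tm n (y(m := (\<lambda>a b. \<Sum>t\<in>T. c t * B t a b))) r k = (\<Sum>t\<in>T. c t * tm n (y(m := B t)) r k)"
    unfolding tm_def using * by (cases "r < 2^n"; cases "k < 2^n") (simp_all add: sum_distrib_right algebra_simps)
qed

lemma card_symdiff_even: "finite A \<Longrightarrow> finite F \<Longrightarrow> even (card ((A - F) \<union> (F - A))) = (even (card A) = even (card F))"
proof -
  assume fA: "finite A" and fF: "finite F"
  have 1: "card ((A - F) \<union> (F - A)) = card (A - F) + card (F - A)"
    by (rule card_Un_disjoint) (use fA fF in auto)
  have 2: "card A = card (A - F) + card (A \<inter> F)"
    using card_Un_disjoint[of "A - F" "A \<inter> F"] fA by (metis Diff_Diff_Int Diff_disjoint Int_commute Un_Diff_Int card_Un_disjoint finite_Diff finite_Int inf_commute)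
  have 3: "card F = card (F - A) + card (A \<inter> F)"
    using card_Un_disjoint[of "F - A" "A \<inter> F"] fF by (metis Diff_Diff_Int Diff_disjoint Int_commute Un_Diff_Int card_Un_disjoint finite_Diff finite_Int inf_commute)
  show ?thesis using 1 2 3 by presburger
qed

lemma par_flip: "par n j' = par n j \<longleftrightarrow> even (card {i. i < n \<and> bit j i \<noteq> bit j' i})"
  for j j' :: nat
proof -
  let ?A = "{i. i < n \<and> bit j i}" and ?F = "{i. i < n \<and> bit j i \<noteq> bit j' i}"
  have "{i. i < n \<and> bit j' i} = (?A - ?F) \<union> (?F - ?A)" by auto
  then show ?thesis unfolding par_def using card_symdiff_even[of ?A ?F] by auto
qed



lemma cspan_v_base: "g \<in> S \<Longrightarrow> g \<in> cspan_v S"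
  unfolding cspan_v_def by (rule CollectI, rule exI[of _ "{g}"], rule exI[of _ "\<lambda>_. 1"]) auto

lemma cspan_v_zero: "(\<lambda>_. 0) \<in> cspan_v S"
  unfolding cspan_v_def by (rule CollectI, rule exI[of _ "{}"]) auto

lemma cspan_v_add: assumes "u \<in> cspan_v S" "w \<in> cspan_v S" shows "(\<lambda>r. u r + w r) \<in> cspan_v S"
proof -
  obtain F1 c1 where 1: "finite F1" "F1 \<subseteq> S" "u = (\<lambda>r. \<Sum>g\<in>F1. c1 g * g r)" using assms(1) unfolding cspan_v_def by blast
  obtain F2 c2 where 2: "finite F2" "F2 \<subseteq> S" "w = (\<lambda>r. \<Sum>g\<in>F2. c2 g * g r)" using assms(2) unfolding cspan_v_def by blast
  define c where "c g = (if g \<in> F1 then c1 g else 0) + (if g \<in> F2 then c2 g else 0)" for g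
  have "(\<lambda>r. u r + w r) = (\<lambda>r. \<Sum>g\<in>F1 \<union> F2. c g * g r)"
  proof
    fix r
    have cg: "c g * g r = (if g \<in> F1 then c1 g * g r else 0) + (if g \<in> F2 then c2 g * g r else 0)" for g
      unfolding c_def by (simp add: distrib_right)
    have "(\<Sum>g\<in>F1 \<union> F2. c g * g r) = (\<Sum>g\<in>F1 \<union> F2. (if g \<in> F1 then c1 g * g r else 0)) + (\<Sum>g\<in>F1 \<union> F2. (if g \<in> F2 then c2 g * g r else 0))"
      unfolding cg by (rule sum.distrib)
    also have "\<dots> = u r + w r"
    proof -
      have "(\<Sum>g\<in>F1 \<union> F2. (if g \<in> F1 then c1 g * g r else 0)) = (\<Sum>g\<in>F1. c1 g * g r)"
        by (rule sum.mono_neutral_cong_right) (use 1 2 in \<open>auto\<close>)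
      moreover have "(\<Sum>g\<in>F1 \<union> F2. (if g \<in> F2 then c2 g * g r else 0)) = (\<Sum>g\<in>F2. c2 g * g r)"
        by (rule sum.mono_neutral_cong_right) (use 1 2 in \<open>auto\<close>)
      ultimately show ?thesis using 1 2 by simp
    qed
    finally show "u r + w r = (\<Sum>g\<in>F1 \<union> F2. c g * g r)" by simp
  qed
  moreover have "finite (F1 \<union> F2)" "F1 \<union> F2 \<subseteq> S" using 1 2 by auto
  ultimately show ?thesis unfolding cspan_v_def by (intro CollectI exI[of _ "F1 \<union> F2"] exI[of _ c]) simp
qed

lemma cspan_v_smult: assumes "u \<in> cspan_v S" shows "(\<lambda>r. a * u r) \<in> cspan_v S"
proof -
  obtain F c where 1: "finite F" "F \<subseteq> S" "u = (\<lambda>r. \<Sum>g\<in>F. c g * g r)" using assms unfolding cspan_v_def by blast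
  have "(\<lambda>r. a * u r) = (\<lambda>r. \<Sum>g\<in>F. (a * c g) * g r)" using 1 by (simp add: sum_distrib_left mult.assoc)
  then show ?thesis using 1 unfolding cspan_v_def by (intro CollectI exI[of _ F] exI[of _ "\<lambda>g. a * c g"]) simp
qed

lemma cspan_v_sum: assumes "finite T" "\<And>t. t \<in> T \<Longrightarrow> h t \<in> cspan_v S"
  shows "(\<lambda>r. \<Sum>t\<in>T. c t * h t r) \<in> cspan_v S"
  using assms
proof (induction T rule: finite_induct)
  case empty then show ?case using cspan_v_zero by simp
next
  case (insert x F)
  have "(\<lambda>r. c x * h x r + (\<Sum>t\<in>F. c t * h t r)) \<in> cspan_v S"
    using insert by (intro cspan_v_add cspan_v_smult) auto
  then show ?case using insert by simp
qed

lemma cspan_m_base: "g \<in> S \<Longrightarrow> g \<in> cspan_m S"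
  unfolding cspan_m_def by (rule CollectI, rule exI[of _ "{g}"], rule exI[of _ "\<lambda>_. 1"]) auto

lemma cspan_m_zero: "(\<lambda>_ _. 0) \<in> cspan_m S"
  unfolding cspan_m_def by (rule CollectI, rule exI[of _ "{}"]) auto

lemma cspan_m_add: assumes "u \<in> cspan_m S" "w \<in> cspan_m S" shows "(\<lambda>r k. u r k + w r k) \<in> cspan_m S"
proof -
  obtain F1 c1 where 1: "finite F1" "F1 \<subseteq> S" "u = (\<lambda>r k. \<Sum>g\<in>F1. c1 g * g r k)" using assms(1) unfolding cspan_m_def by blast
  obtain F2 c2 where 2: "finite F2" "F2 \<subseteq> S" "w = (\<lambda>r k. \<Sum>g\<in>F2. c2 g * g r k)" using assms(2) unfolding cspan_m_def by blast
  define c where "c g = (if g \<in> F1 then c1 g else 0) + (if g \<in> F2 then c2 g else 0)" for g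
  have "(\<lambda>r k. u r k + w r k) = (\<lambda>r k. \<Sum>g\<in>F1 \<union> F2. c g * g r k)"
  proof (intro ext)
    fix r k
    have cg: "c g * g r k = (if g \<in> F1 then c1 g * g r k else 0) + (if g \<in> F2 then c2 g * g r k else 0)" for g
      unfolding c_def by (simp add: distrib_right)
    have "(\<Sum>g\<in>F1 \<union> F2. c g * g r k) = (\<Sum>g\<in>F1 \<union> F2. (if g \<in> F1 then c1 g * g r k else 0)) + (\<Sum>g\<in>F1 \<union> F2. (if g \<in> F2 then c2 g * g r k else 0))"
      unfolding cg by (rule sum.distrib)
    also have "\<dots> = u r k + w r k"
    proof -
      have "(\<Sum>g\<in>F1 \<union> F2. (if g \<in> F1 then c1 g * g r k else 0)) = (\<Sum>g\<in>F1. c1 g * g r k)"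
        by (rule sum.mono_neutral_cong_right) (use 1 2 in \<open>auto\<close>)
      moreover have "(\<Sum>g\<in>F1 \<union> F2. (if g \<in> F2 then c2 g * g r k else 0)) = (\<Sum>g\<in>F2. c2 g * g r k)"
        by (rule sum.mono_neutral_cong_right) (use 1 2 in \<open>auto\<close>)
      ultimately show ?thesis using 1 2 by simp
    qed
    finally show "u r k + w r k = (\<Sum>g\<in>F1 \<union> F2. c g * g r k)" by simp
  qed
  moreover have "finite (F1 \<union> F2)" "F1 \<union> F2 \<subseteq> S" using 1 2 by auto
  ultimately show ?thesis unfolding cspan_m_def by (intro CollectI exI[of _ "F1 \<union> F2"] exI[of _ c]) simp
qed

lemma cspan_m_smult: assumes "u \<in> cspan_m S" shows "(\<lambda>r k. a * u r k) \<in> cspan_m S"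
proof -
  obtain F c where 1: "finite F" "F \<subseteq> S" "u = (\<lambda>r k. \<Sum>g\<in>F. c g * g r k)" using assms unfolding cspan_m_def by blast
  have "(\<lambda>r k. a * u r k) = (\<lambda>r k. \<Sum>g\<in>F. (a * c g) * g r k)" using 1 by (simp add: sum_distrib_left mult.assoc)
  then show ?thesis using 1 unfolding cspan_m_def by (intro CollectI exI[of _ F] exI[of _ "\<lambda>g. a * c g"]) simp
qed

lemma cspan_m_sum: assumes "finite T" "\<And>t. t \<in> T \<Longrightarrow> h t \<in> cspan_m S"
  shows "(\<lambda>r k. \<Sum>t\<in>T. c t * h t r k) \<in> cspan_m S"
  using assms
proof (induction T rule: finite_induct)
  case empty then show ?case using cspan_m_zero by simp
next
  case (insert x F)
  have "(\<lambda>r k. c x * h x r k + (\<Sum>t\<in>F. c t * h t r k)) \<in> cspan_m S"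
    using insert by (intro cspan_m_add cspan_m_smult) auto
  then show ?case using insert by simp
qed

lemma mulv_sum_mat: "mulv N (\<lambda>r k. \<Sum>g\<in>F. c g * g r k) h = (\<lambda>r. \<Sum>g\<in>F. c g * mulv N g h r)"
proof (intro ext)
  fix r
  have "(\<Sum>k<N. (\<Sum>g\<in>F. c g * g r k) * h k) = (\<Sum>k<N. \<Sum>g\<in>F. c g * (g r k * h k))"
    by (simp add: sum_distrib_right mult.assoc)
  also have "\<dots> = (\<Sum>g\<in>F. \<Sum>k<N. c g * (g r k * h k))" by (rule sum.swap)
  also have "\<dots> = (\<Sum>g\<in>F. c g * (\<Sum>k<N. g r k * h k))" by (simp add: sum_distrib_left)
  finally show "mulv N (\<lambda>r k. \<Sum>g\<in>F. c g * g r k) h r = (\<Sum>g\<in>F. c g * mulv N g h r)"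
    unfolding mulv_def by simp
qed

lemma mulv_add_mat: "mulv N (\<lambda>r k. A r k + B r k) h = (\<lambda>r. mulv N A h r + mulv N B h r)"
  unfolding mulv_def by (intro ext) (simp add: distrib_right sum.distrib)

lemma mulv_smult_mat: "mulv N (\<lambda>r k. a * A r k) h = (\<lambda>r. a * mulv N A h r)"
  unfolding mulv_def by (intro ext) (simp add: sum_distrib_left mult.assoc)

lemma mulv_sum_vec: "mulv N M (\<lambda>k. \<Sum>g\<in>F. d g * g k) = (\<lambda>r. \<Sum>g\<in>F. d g * mulv N M g r)"
proof (intro ext)
  fix r
  have "(\<Sum>k<N. M r k * (\<Sum>g\<in>F. d g * g k)) = (\<Sum>k<N. \<Sum>g\<in>F. d g * (M r k * g k))"
    by (simp add: sum_distrib_left mult.left_commute)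
  also have "\<dots> = (\<Sum>g\<in>F. \<Sum>k<N. d g * (M r k * g k))" by (rule sum.swap)
  also have "\<dots> = (\<Sum>g\<in>F. d g * (\<Sum>k<N. M r k * g k))" by (simp add: sum_distrib_left)
  finally show "mulv N M (\<lambda>k. \<Sum>g\<in>F. d g * g k) r = (\<Sum>g\<in>F. d g * mulv N M g r)"
    unfolding mulv_def by simp
qed

lemma mulv_idm: "(\<And>k. N \<le> k \<Longrightarrow> h k = 0) \<Longrightarrow> mulv N (idm N) h = h"
proof (intro ext)
  fix r assume h: "\<And>k. N \<le> k \<Longrightarrow> h k = 0"
  show "mulv N (idm N) h r = h r"
  proof (cases "r < N")
    case True
    have "(\<Sum>k<N. (if r < N \<and> k = r then 1 else 0) * h k) = (\<Sum>k<N. if k = r then h k else 0)"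
      by (rule sum.cong) (use True in auto)
    also have "\<dots> = h r" using True by simp
    finally show ?thesis using True unfolding mulv_def idm_def by simp
  next
    case False then show ?thesis using h unfolding mulv_def by simp
  qed
qed

lemma ctrace_sum: "ctrace N (\<lambda>r k. \<Sum>g\<in>F. c g * g r k) = (\<Sum>g\<in>F. c g * ctrace N g)"
  unfolding ctrace_def sum_distrib_left by (rule sum.swap)

lemma ctrace_idm: "ctrace N (idm N) = of_nat N"
  unfolding ctrace_def idm_def by simp

lemma pres_span: assumes "\<And>h. h \<in> S \<Longrightarrow> mulv N M h \<in> cspan_v S" "w \<in> cspan_v S"
  shows "mulv N M w \<in> cspan_v S"
proof -
  obtain F d where 1: "finite F" "F \<subseteq> S" "w = (\<lambda>r. \<Sum>g\<in>F. d g * g r)" using assms(2) unfolding cspan_v_def by blast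
  have "mulv N M w = (\<lambda>r. \<Sum>g\<in>F. d g * mulv N M g r)" using 1 by (simp add: mulv_sum_vec)
  also have "\<dots> \<in> cspan_v S" using 1 assms(1) by (intro cspan_v_sum) auto
  finally show ?thesis .
qed



definition gens :: "nat \<Rightarrow> (nat \<Rightarrow> mat2) \<Rightarrow> cmat set" where
  "gens n v = {embed n I x | I x. I \<subseteq> {..<n} \<and> I \<noteq> {} \<and>
      (\<exists>\<tau>. even (card {i\<in>I. \<tau> i}) \<and>
           (\<forall>i\<in>I. x i \<in> (if \<tau> i then Vt (v i) else Vl (v i))))}"

lemma XB_gens: "XB n v = cspan_m (gens n v)"
  unfolding XB_def gens_def by simp

lemma Vl_sl2: "v \<in> sl2 \<Longrightarrow> Vl v \<subseteq> sl2"
  by (auto simp: Vl_def sl2_def tr2_def algebra_simps distrib_left[symmetric])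

lemma Vt_sl2: "Vt v \<subseteq> sl2"
  by (auto simp: Vt_def)

lemma gen_trace0: assumes "frame n v" "g \<in> gens n v" shows "ctrace (2^n) g = 0"
proof -
  obtain I x \<tau> where g: "g = embed n I x" and I: "I \<subseteq> {..<n}" "I \<noteq> {}"
    and x: "\<forall>i\<in>I. x i \<in> (if \<tau> i then Vt (v i) else Vl (v i))"
    using assms(2) unfolding gens_def by blast
  obtain i0 where i0: "i0 \<in> I" using I by blast
  have "i0 < n" using i0 I by auto
  have "x i0 \<in> sl2" using x i0 Vl_sl2[of "v i0"] Vt_sl2[of "v i0"] assms(1) \<open>i0 < n\<close>
    unfolding frame_def by (auto split: if_splits)
  then have "tr2 ((\<lambda>i. if i \<in> I then x i else id2) i0) = 0" using i0 by (simp add: sl2_def)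
  then show ?thesis unfolding g embed_tm ctrace_tm using \<open>i0 < n\<close>
    by (intro prod_zero bexI[of _ i0]) auto
qed

lemma ctrace_cspan0: assumes "\<And>g. g \<in> S \<Longrightarrow> ctrace N g = 0" "x \<in> cspan_m S" shows "ctrace N x = 0"
proof -
  obtain F c where 1: "finite F" "F \<subseteq> S" "x = (\<lambda>r k. \<Sum>g\<in>F. c g * g r k)" using assms(2) unfolding cspan_m_def by blast
  show ?thesis using 1 assms(1) by (auto simp: ctrace_sum intro!: sum.neutral)
qed

lemma inrange_cspan: assumes "\<And>g. g \<in> S \<Longrightarrow> in_range N g" "x \<in> cspan_m S" shows "in_range N x"
proof -
  obtain F c where 1: "finite F" "F \<subseteq> S" "x = (\<lambda>r k. \<Sum>g\<in>F. c g * g r k)" using assms(2) unfolding cspan_m_def by blast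
  show ?thesis using 1 assms(1) unfolding in_range_def by (auto intro!: sum.neutral)
qed

lemma embed_inrange: "in_range (2^n) (embed n I x)"
  unfolding in_range_def embed_def by auto

lemma XB_trace0: "frame n v \<Longrightarrow> x \<in> XB n v \<Longrightarrow> ctrace (2^n) x = 0"
  unfolding XB_gens using gen_trace0 ctrace_cspan0 by blast

lemma XB_inrange: "x \<in> XB n v \<Longrightarrow> in_range (2^n) x"
  unfolding XB_gens by (rule inrange_cspan) (auto simp: gens_def embed_inrange)

lemma bloch_L: assumes "frame n v" "x \<in> XB n v" shows "bloch n x \<in> Lspace n"
proof -
  have ir: "in_range (2^n) x" using XB_inrange[OF assms(2)] .
  have "in_range (2^n) (bloch n x)" using ir unfolding in_range_def bloch_def idm_def by auto
  moreover have "ctrace (2^n) (bloch n x) = ctrace (2^n) (idm (2^n)) / 2^n + ctrace (2^n) x"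
    unfolding ctrace_def bloch_def by (simp add: sum.distrib sum_divide_distrib)
  then have "ctrace (2^n) (bloch n x) = 1" using XB_trace0[OF assms] by (simp add: ctrace_idm)
  ultimately show ?thesis unfolding Lspace_def by simp
qed

lemma mv2_id2: "mv2 id2 w = w"
  by (auto simp: mv2_def id2_def fun_eq_iff all_bool_eq)

lemma mv2_scale: "mv2 (\<lambda>a b. c * y a b) w = (\<lambda>b. c * mv2 y w b)"
  by (simp add: mv2_def fun_eq_iff algebra_simps)

lemma form2_scale2: "form2 y (\<lambda>a b. c * v a b) = c * form2 y v"
  by (simp add: form2_def sumB algebra_simps)

lemma factor_A: assumes "v \<in> sl2" "form2 v v \<noteq> 0"
  shows "\<exists>e. det2 e \<noteq> 0 \<and> (\<forall>y\<in>Vl v. \<forall>a. \<exists>\<kappa>. mv2 y (e a) = (\<lambda>b. \<kappa> * e a b))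
             \<and> (\<forall>y\<in>Vt v. \<forall>a. \<exists>\<kappa>. mv2 y (e a) = (\<lambda>b. \<kappa> * e (\<not>a) b))"
proof -
  obtain e \<mu> where d: "det2 e \<noteq> 0" and mu: "\<mu> \<noteq> 0" and v: "v = (\<lambda>r c. \<mu> * vB e r c)"
    using eigbasis[OF assms] by blast
  have 1: "\<exists>\<kappa>. mv2 y (e a) = (\<lambda>b. \<kappa> * e a b)" if yl: "y \<in> Vl v" for y a
  proof -
    obtain c where y: "y = (\<lambda>a b. c * v a b)" using yl unfolding Vl_def by blast
    have "y = (\<lambda>a b. (c * \<mu>) * vB e a b)" unfolding y v by (simp add: mult.assoc)
    then have "mv2 y (e a) = (\<lambda>b. ((c * \<mu>) * (if a then -1 else 1)) * e a b)"
      by (simp add: mv2_scale vB_eig[OF d] mult.assoc)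
    then show ?thesis by blast
  qed
  have 2: "\<exists>\<kappa>. mv2 y (e a) = (\<lambda>b. \<kappa> * e (\<not>a) b)" if "y \<in> Vt v" for y a
  proof -
    have "y \<in> Vt (vB e)" using that mu unfolding Vt_def v form2_scale2 by simp
    then show ?thesis using Vt_vB[OF d] by blast
  qed
  show ?thesis using d 1 2 by blast
qed

lemma gen_maps:
  assumes fl: "even (card {i. i < n \<and> fl i})"
    and y: "\<forall>i<n. \<forall>a. \<exists>\<kappa>. mv2 (y i) (e i a) = (\<lambda>b. \<kappa> * e i (a \<noteq> fl i) b)"
    and j: "j < 2^n"
  shows "mulv (2^n) (tm n y) (btensor n e j) \<in> cspan_v {btensor n e j' | j'. j' < 2^n \<and> par n j' = par n j}"
proof -
  have "\<forall>i. \<exists>\<kappa>. i < n \<longrightarrow> mv2 (y i) (e i (bit j i)) = (\<lambda>b. \<kappa> * e i (bit j i \<noteq> fl i) b)"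
    using y by blast
  then obtain K where K: "\<And>i. i < n \<Longrightarrow> mv2 (y i) (e i (bit j i)) = (\<lambda>b. K i * e i (bit j i \<noteq> fl i) b)"
    by metis
  obtain j' :: nat where j': "j' < 2^n" "\<forall>i<n. bit j' i = (bit j i \<noteq> fl i)"
    using bits_exist[of n "\<lambda>i. bit j i \<noteq> fl i"] by blast
  have "mulv (2^n) (tm n y) (btensor n e j) = tv n (\<lambda>i. mv2 (y i) (e i (bit j i)))"
    by (simp add: btensor_tv mulv_tm_tv)
  also have "\<dots> = tv n (\<lambda>i b. K i * e i (bit j' i) b)"
    by (rule tv_cong) (simp add: K j')
  also have "\<dots> = (\<lambda>k. (\<Prod>i<n. K i) * btensor n e j' k)"
    by (simp add: tv_scale btensor_tv)
  finally have eq: "mulv (2^n) (tm n y) (btensor n e j) = (\<lambda>k. (\<Prod>i<n. K i) * btensor n e j' k)" .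
  have "{i. i < n \<and> bit j i \<noteq> bit j' i} = {i. i < n \<and> fl i}" using j' by auto
  then have "par n j' = par n j" using par_flip[of n j' j] fl by simp
  then have "btensor n e j' \<in> {btensor n e j' | j'. j' < 2^n \<and> par n j' = par n j}" using j' by blast
  then show ?thesis unfolding eq by (intro cspan_v_smult cspan_v_base)
qed

lemma gen_pres: assumes v: "frame n v" and E: "\<forall>i<n. det2 (E i) \<noteq> 0 \<and> (\<forall>y\<in>Vl (v i). \<forall>a. \<exists>\<kappa>. mv2 y (E i a) = (\<lambda>b. \<kappa> * E i a b))
             \<and> (\<forall>y\<in>Vt (v i). \<forall>a. \<exists>\<kappa>. mv2 y (E i a) = (\<lambda>b. \<kappa> * E i (\<not>a) b))"
  and g: "g \<in> gens n v" and j: "j < 2^n"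
  shows "mulv (2^n) g (btensor n E j) \<in> cspan_v {btensor n E j' | j'. j' < 2^n \<and> par n j' = par n j}"
proof -
  obtain I x \<tau> where gI: "g = embed n I x" and I: "I \<subseteq> {..<n}"
    and ev: "even (card {i\<in>I. \<tau> i})"
    and x: "\<forall>i\<in>I. x i \<in> (if \<tau> i then Vt (v i) else Vl (v i))"
    using g unfolding gens_def by blast
  define y where "y = (\<lambda>i. if i \<in> I then x i else id2)"
  define fl where "fl = (\<lambda>i. i \<in> I \<and> \<tau> i)"
  have "{i. i < n \<and> fl i} = {i\<in>I. \<tau> i}" using I unfolding fl_def by auto
  then have fle: "even (card {i. i < n \<and> fl i})" using ev by simp
  have yy: "\<forall>i<n. \<forall>a. \<exists>\<kappa>. mv2 (y i) (E i a) = (\<lambda>b. \<kappa> * E i (a \<noteq> fl i) b)"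
  proof (intro allI impI)
    fix i a assume i: "i < n"
    show "\<exists>\<kappa>. mv2 (y i) (E i a) = (\<lambda>b. \<kappa> * E i (a \<noteq> fl i) b)"
    proof (cases "i \<in> I")
      case False
      then have "mv2 (y i) (E i a) = (\<lambda>b. 1 * E i (a \<noteq> fl i) b)" by (simp add: y_def fl_def mv2_id2)
      then show ?thesis by blast
    next
      case True
      show ?thesis
      proof (cases "\<tau> i")
        case True
        then have "x i \<in> Vt (v i)" using x \<open>i \<in> I\<close> by auto
        then show ?thesis using E i True \<open>i \<in> I\<close> by (simp add: y_def fl_def)
      next
        case False
        then have "x i \<in> Vl (v i)" using x \<open>i \<in> I\<close> by auto
        then show ?thesis using E i False \<open>i \<in> I\<close> by (simp add: y_def fl_def)
      qed
    qed
  qed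
  have "g = tm n y" unfolding gI embed_tm y_def ..
  then show ?thesis using gen_maps[OF fle yy j] by simp
qed

lemma A_main: assumes "\<rho> \<in> pi_image n" shows "Xstate n \<rho>"
proof -
  obtain v x where rho: "\<rho> = bloch n x" and v: "frame n v" and x: "x \<in> XB n v"
    using assms unfolding pi_image_def by blast
  have "\<forall>i. \<exists>e. i < n \<longrightarrow> (det2 e \<noteq> 0 \<and> (\<forall>y\<in>Vl (v i). \<forall>a. \<exists>\<kappa>. mv2 y (e a) = (\<lambda>b. \<kappa> * e a b))
             \<and> (\<forall>y\<in>Vt (v i). \<forall>a. \<exists>\<kappa>. mv2 y (e a) = (\<lambda>b. \<kappa> * e (\<not>a) b)))"
    using factor_A v unfolding frame_def by blast
  then obtain E where E: "\<forall>i<n. det2 (E i) \<noteq> 0 \<and> (\<forall>y\<in>Vl (v i). \<forall>a. \<exists>\<kappa>. mv2 y (E i a) = (\<lambda>b. \<kappa> * E i a b))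
             \<and> (\<forall>y\<in>Vt (v i). \<forall>a. \<exists>\<kappa>. mv2 y (E i a) = (\<lambda>b. \<kappa> * E i (\<not>a) b))"
    by metis
  have basis: "\<forall>i<n. basis2 (E i)" using E by (simp add: basis2_det)
  obtain F c where F: "finite F" "F \<subseteq> gens n v" "x = (\<lambda>r k. \<Sum>g\<in>F. c g * g r k)"
    using x unfolding XB_gens cspan_m_def by blast
  have bl: "bloch n x = (\<lambda>r k. (1 / 2^n) * idm (2^n) r k + (\<Sum>g\<in>F. c g * g r k))"
    unfolding bloch_def F(3) by simp
  have pres: "mulv (2^n) \<rho> w \<in> cspan_v {btensor n E j | j. j < 2^n \<and> par n j = p}"
    if w: "w \<in> cspan_v {btensor n E j | j. j < 2^n \<and> par n j = p}" for p w
  proof (rule pres_span[OF _ w])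
    fix h assume "h \<in> {btensor n E j | j. j < 2^n \<and> par n j = p}"
    then obtain j where h: "h = btensor n E j" and j: "j < 2^n" and pj: "par n j = p" by blast
    have hz: "\<And>k. 2^n \<le> k \<Longrightarrow> h k = 0" unfolding h btensor_def by simp
    have "mulv (2^n) \<rho> h = (\<lambda>r. (1 / 2^n) * h r + (\<Sum>g\<in>F. c g * mulv (2^n) g h r))"
      unfolding rho bl mulv_add_mat mulv_smult_mat mulv_sum_mat by (simp add: mulv_idm[OF hz])
    also have "\<dots> \<in> cspan_v {btensor n E j | j. j < 2^n \<and> par n j = p}"
    proof (rule cspan_v_add)
      show "(\<lambda>r. 1 / 2 ^ n * h r) \<in> cspan_v {btensor n E j | j. j < 2^n \<and> par n j = p}"
        using h j pj by (intro cspan_v_smult cspan_v_base) blast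
      show "(\<lambda>r. \<Sum>g\<in>F. c g * mulv (2^n) g h r) \<in> cspan_v {btensor n E j | j. j < 2^n \<and> par n j = p}"
        using F gen_pres[OF v E _ j] unfolding h pj[symmetric] by (intro cspan_v_sum) auto
    qed
    finally show "mulv (2^n) \<rho> h \<in> cspan_v {btensor n E j | j. j < 2^n \<and> par n j = p}" .
  qed
  have "\<rho> \<in> Lspace n" using bloch_L[OF v x] rho by simp
  then show ?thesis unfolding Xstate_def using basis pres by blast
qed


definition dt :: "nat \<Rightarrow> (nat \<Rightarrow> mat2) \<Rightarrow> nat \<Rightarrow> cvec" where
  "dt n e j = tv n (\<lambda>i. dual (e i) (bit j i))"

definition Et :: "nat \<Rightarrow> (nat \<Rightarrow> mat2) \<Rightarrow> nat \<Rightarrow> nat \<Rightarrow> cmat" where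
  "Et n e j j' = tm n (\<lambda>i. E2 (e i) (bit j i) (bit j' i))"

lemma complT: assumes d: "\<forall>i<n. det2 (e i) \<noteq> 0" and r: "r < 2^n" and s: "s < 2^n"
  shows "(\<Sum>j::nat<2^n. btensor n e j r * dt n e j s) = (if r = s then 1 else 0)"
proof -
  have "(\<Sum>j::nat<2^n. btensor n e j r * dt n e j s)
      = (\<Sum>j::nat<2^n. \<Prod>i<n. e i (bit j i) (bit r i) * dual (e i) (bit j i) (bit s i))"
    using r s by (simp add: btensor_def dt_def tv_def prod.distrib)
  also have "\<dots> = (\<Prod>i<n. e i False (bit r i) * dual (e i) False (bit s i) + e i True (bit r i) * dual (e i) True (bit s i))"
    by (rule sum_prod_bits)
  also have "\<dots> = (\<Prod>i<n. id2 (bit r i) (bit s i))"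
    by (rule prod.cong) (simp_all add: compl d)
  also have "\<dots> = (if r = s then 1 else 0)" by (rule prod_id2_bits[OF r s])
  finally show ?thesis .
qed

lemma biorthT: assumes d: "\<forall>i<n. det2 (e i) \<noteq> 0" and j: "j < 2^n" and j': "j' < 2^n"
  shows "(\<Sum>s::nat<2^n. dt n e j s * btensor n e j' s) = (if j = j' then 1 else 0)"
proof -
  have "(\<Sum>s::nat<2^n. dt n e j s * btensor n e j' s)
      = (\<Sum>s::nat<2^n. \<Prod>i<n. dual (e i) (bit j i) (bit s i) * e i (bit j' i) (bit s i))"
    by (simp add: btensor_def dt_def tv_def prod.distrib)
  also have "\<dots> = (\<Prod>i<n. dual (e i) (bit j i) False * e i (bit j' i) False + dual (e i) (bit j i) True * e i (bit j' i) True)"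
    by (rule sum_prod_bits)
  also have "\<dots> = (\<Prod>i<n. id2 (bit j i) (bit j' i))"
    by (rule prod.cong) (simp_all add: biorth d id2_def)
  also have "\<dots> = (if j = j' then 1 else 0)" by (rule prod_id2_bits[OF j j'])
  finally show ?thesis .
qed

lemma Et_eq: "Et n e j j' = (\<lambda>r c. btensor n e j r * dt n e j' c)"
  unfolding Et_def tm_def btensor_def dt_def tv_def E2_def by (intro ext) (simp add: prod.distrib)

lemma swap2: "(\<Sum>j'\<in>J. (\<Sum>s\<in>S. A s * M s j') * (B * D j')) = B * (\<Sum>s\<in>S. A s * (\<Sum>j'\<in>J. M s j' * D j'))"
  for A :: "'s \<Rightarrow> 'a::comm_semiring_1" and M :: "'s \<Rightarrow> 'j \<Rightarrow> 'a" and B :: 'a and D :: "'j \<Rightarrow> 'a"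
proof -
  have "(\<Sum>j'\<in>J. (\<Sum>s\<in>S. A s * M s j') * (B * D j')) = (\<Sum>j'\<in>J. \<Sum>s\<in>S. B * (A s * (M s j' * D j')))"
    by (rule sum.cong[OF refl], simp only: sum_distrib_right, rule sum.cong[OF refl], simp add: mult_ac)
  also have "\<dots> = (\<Sum>s\<in>S. \<Sum>j'\<in>J. B * (A s * (M s j' * D j')))" by (rule sum.swap)
  also have "\<dots> = B * (\<Sum>s\<in>S. A s * (\<Sum>j'\<in>J. M s j' * D j'))" by (simp add: sum_distrib_left mult.assoc)
  finally show ?thesis .
qed

lemma swap1: "(\<Sum>j\<in>J. (\<Sum>t\<in>T. X t * Y t j) * Z j) = (\<Sum>t\<in>T. X t * (\<Sum>j\<in>J. Y t j * Z j))"
  for X :: "'t \<Rightarrow> 'a::comm_semiring_1"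
proof -
  have "(\<Sum>j\<in>J. (\<Sum>t\<in>T. X t * Y t j) * Z j) = (\<Sum>j\<in>J. \<Sum>t\<in>T. X t * (Y t j * Z j))"
    by (simp add: sum_distrib_right mult.assoc)
  also have "\<dots> = (\<Sum>t\<in>T. \<Sum>j\<in>J. X t * (Y t j * Z j))" by (rule sum.swap)
  finally show ?thesis by (simp add: sum_distrib_left)
qed

lemma swap3: "(\<Sum>j\<in>J. P j * (\<Sum>s\<in>S. Q j s * R s)) = (\<Sum>s\<in>S. R s * (\<Sum>j\<in>J. P j * Q j s))"
  for P :: "'j \<Rightarrow> 'a::comm_semiring_1"
proof -
  have "(\<Sum>j\<in>J. P j * (\<Sum>s\<in>S. Q j s * R s)) = (\<Sum>j\<in>J. \<Sum>s\<in>S. R s * (P j * Q j s))"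
    by (rule sum.cong[OF refl], simp only: sum_distrib_left, rule sum.cong[OF refl], simp add: mult_ac)
  also have "\<dots> = (\<Sum>s\<in>S. \<Sum>j\<in>J. R s * (P j * Q j s))" by (rule sum.swap)
  finally show ?thesis by (simp add: sum_distrib_left)
qed

definition kap :: "nat \<Rightarrow> (nat \<Rightarrow> mat2) \<Rightarrow> cmat \<Rightarrow> nat \<Rightarrow> nat \<Rightarrow> complex" where
  "kap n e \<rho> j j' = (\<Sum>s::nat<2^n. dt n e j s * mulv (2^n) \<rho> (btensor n e j') s)"

lemma expand_rho: assumes d: "\<forall>i<n. det2 (e i) \<noteq> 0" and ir: "in_range (2^n) \<rho>"
  shows "\<rho> = (\<lambda>r c. \<Sum>j::nat<2^n. \<Sum>j'::nat<2^n. kap n e \<rho> j j' * Et n e j j' r c)"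
proof (intro ext)
  fix r c :: nat
  show "\<rho> r c = (\<Sum>j::nat<2^n. \<Sum>j'::nat<2^n. kap n e \<rho> j j' * Et n e j j' r c)"
  proof (cases "r < 2^n \<and> c < 2^n")
    case False
    then have "\<rho> r c = 0" using ir unfolding in_range_def by auto
    moreover have "Et n e j j' r c = 0" for j j' using False unfolding Et_def tm_def by auto
    ultimately show ?thesis by simp
  next
    case True
    then have r: "r < 2^n" and c: "c < 2^n" by auto
    have a: "(\<Sum>j'::nat<2^n. mulv (2^n) \<rho> (btensor n e j') s * dt n e j' c) = \<rho> s c" if s: "s < 2^n" for s
    proof -
      have "(\<Sum>j'::nat<2^n. mulv (2^n) \<rho> (btensor n e j') s * dt n e j' c)
          = (\<Sum>j'::nat<2^n. (\<Sum>t::nat<2^n. \<rho> s t * btensor n e j' t) * dt n e j' c)"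
        using s by (simp add: mulv_def)
      also have "\<dots> = (\<Sum>t::nat<2^n. \<rho> s t * (\<Sum>j'::nat<2^n. btensor n e j' t * dt n e j' c))"
        by (rule swap1)
      also have "\<dots> = (\<Sum>t::nat<2^n. if t = c then \<rho> s t else 0)"
        by (rule sum.cong[OF refl]) (simp add: complT[OF d _ c])
      also have "\<dots> = \<rho> s c" using c by simp
      finally show ?thesis .
    qed
    have "(\<Sum>j::nat<2^n. \<Sum>j'::nat<2^n. kap n e \<rho> j j' * Et n e j j' r c)
        = (\<Sum>j::nat<2^n. \<Sum>j'::nat<2^n. (\<Sum>s::nat<2^n. dt n e j s * mulv (2^n) \<rho> (btensor n e j') s) * (btensor n e j r * dt n e j' c))"
      by (simp add: kap_def Et_eq)
    also have "\<dots> = (\<Sum>j::nat<2^n. btensor n e j r * (\<Sum>s::nat<2^n. dt n e j s * (\<Sum>j'::nat<2^n. mulv (2^n) \<rho> (btensor n e j') s * dt n e j' c)))"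
      by (rule sum.cong[OF refl]) (rule swap2)
    also have "\<dots> = (\<Sum>j::nat<2^n. btensor n e j r * (\<Sum>s::nat<2^n. dt n e j s * \<rho> s c))"
      by (rule sum.cong[OF refl], rule arg_cong[where f="\<lambda>z. _ * z"], rule sum.cong[OF refl]) (simp add: a)
    also have "\<dots> = (\<Sum>s::nat<2^n. \<rho> s c * (\<Sum>j::nat<2^n. btensor n e j r * dt n e j s))"
      by (rule swap3)
    also have "\<dots> = (\<Sum>s::nat<2^n. if s = r then \<rho> s c else 0)"
      by (rule sum.cong[OF refl]) (auto simp: complT[OF d r])
    also have "\<dots> = \<rho> r c" using r by simp
    finally show ?thesis by simp
  qed
qed

lemma kap_zero: assumes d: "\<forall>i<n. det2 (e i) \<noteq> 0" and j: "j < 2^n"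
  and w: "mulv (2^n) \<rho> (btensor n e j') \<in> cspan_v {btensor n e j'' | j''. j'' < 2^n \<and> par n j'' = par n j'}"
  and p: "par n j \<noteq> par n j'"
  shows "kap n e \<rho> j j' = 0"
proof -
  obtain G d where G: "finite G" "G \<subseteq> {btensor n e j'' | j''. j'' < 2^n \<and> par n j'' = par n j'}"
    "mulv (2^n) \<rho> (btensor n e j') = (\<lambda>r. \<Sum>g\<in>G. d g * g r)"
    using w unfolding cspan_v_def by blast
  have z: "(\<Sum>s::nat<2^n. dt n e j s * g s) = 0" if g: "g \<in> G" for g
  proof -
    obtain j'' where j'': "g = btensor n e j''" "j'' < 2^n" "par n j'' = par n j'" using g G(2) by blast
    then have "j \<noteq> j''" using p by auto
    then show ?thesis using biorthT[OF d j j''(2)] j''(1) by simp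
  qed
  have "kap n e \<rho> j j' = (\<Sum>s::nat<2^n. dt n e j s * (\<Sum>g\<in>G. d g * g s))"
    unfolding kap_def G(3) ..
  also have "\<dots> = (\<Sum>g\<in>G. d g * (\<Sum>s::nat<2^n. dt n e j s * g s))"
  proof -
    have "(\<Sum>s::nat<2^n. dt n e j s * (\<Sum>g\<in>G. d g * g s)) = (\<Sum>s::nat<2^n. \<Sum>g\<in>G. d g * (dt n e j s * g s))"
      by (rule sum.cong[OF refl], simp only: sum_distrib_left, rule sum.cong[OF refl], simp add: mult_ac)
    also have "\<dots> = (\<Sum>g\<in>G. \<Sum>s::nat<2^n. d g * (dt n e j s * g s))" by (rule sum.swap)
    finally show ?thesis by (simp add: sum_distrib_left)
  qed
  also have "\<dots> = 0" using z by simp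
  finally show ?thesis .
qed

lemma tm_multilin:
  fixes T :: "nat \<Rightarrow> nat set" and c :: "nat \<Rightarrow> nat \<Rightarrow> complex" and B :: "nat \<Rightarrow> nat \<Rightarrow> mat2"
    and Good :: "nat \<Rightarrow> mat2 set"
  assumes fin: "\<And>i. i < n \<Longrightarrow> finite (T i)"
    and A: "\<And>i. i < n \<Longrightarrow> A i = (\<lambda>a b. \<Sum>t\<in>T i. c i t * B i t a b)"
    and good: "\<And>i t. i < n \<Longrightarrow> t \<in> T i \<Longrightarrow> B i t \<in> Good i"
    and P: "\<And>y. (\<And>i. i < n \<Longrightarrow> y i \<in> Good i) \<Longrightarrow> tm n y \<in> cspan_m G"
  shows "tm n A \<in> cspan_m G"
proof -
  have claim: "\<forall>y. (\<forall>i<m. y i = A i) \<and> (\<forall>i. m \<le> i \<and> i < n \<longrightarrow> y i \<in> Good i) \<longrightarrow> tm n y \<in> cspan_m G"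
    if "m \<le> n" for m
    using that
  proof (induction m)
    case 0 then show ?case using P by auto
  next
    case (Suc m)
    show ?case
    proof (intro allI impI)
      fix y assume h: "(\<forall>i<Suc m. y i = A i) \<and> (\<forall>i. Suc m \<le> i \<and> i < n \<longrightarrow> y i \<in> Good i)"
      have mn: "m < n" using Suc.prems by simp
      have "y = y(m := A m)" using h by auto
      also have "\<dots> = y(m := (\<lambda>a b. \<Sum>t\<in>T m. c m t * B m t a b))" using A[OF mn] by simp
      finally have "tm n y = tm n (y(m := (\<lambda>a b. \<Sum>t\<in>T m. c m t * B m t a b)))" by (rule arg_cong)
      also have "\<dots> = (\<lambda>r k. \<Sum>t\<in>T m. c m t * tm n (y(m := B m t)) r k)"
        by (rule tm_factor_sum[OF mn fin[OF mn]])
      also have "\<dots> \<in> cspan_m G"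
      proof (rule cspan_m_sum[OF fin[OF mn]])
        fix t assume t: "t \<in> T m"
        have "(\<forall>i<m. (y(m := B m t)) i = A i) \<and> (\<forall>i. m \<le> i \<and> i < n \<longrightarrow> (y(m := B m t)) i \<in> Good i)"
          using h good[OF mn t] by auto
        then show "tm n (y(m := B m t)) \<in> cspan_m G" using Suc.IH Suc.prems by simp
      qed
      finally show "tm n y \<in> cspan_m G" .
    qed
  qed
  have "(\<forall>i<n. A i = A i) \<and> (\<forall>i. n \<le> i \<and> i < n \<longrightarrow> A i \<in> Good i)" by auto
  then show ?thesis using claim[of n] by blast
qed

definition G0 :: "nat \<Rightarrow> (nat \<Rightarrow> mat2) \<Rightarrow> cmat set" where
  "G0 n v = {embed n I x | I x. I \<subseteq> {..<n} \<and>
      (\<exists>\<tau>. even (card {i\<in>I. \<tau> i}) \<and>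
           (\<forall>i\<in>I. x i \<in> (if \<tau> i then Vt (v i) else Vl (v i))))}"

lemma Et_in: assumes d: "\<forall>i<n. det2 (e i) \<noteq> 0" and p: "par n j = par n j'"
  shows "Et n e j j' \<in> cspan_m (G0 n (\<lambda>i. vB (e i)))"
proof -
  define fl where "fl i = (bit j i \<noteq> bit j' i)" for i
  have ev: "even (card {i. i < n \<and> fl i})" using p par_flip[of n j' j] unfolding fl_def by simp
  define T where "T = (\<lambda>i::nat. {0::nat, 1})"
  define c :: "nat \<Rightarrow> nat \<Rightarrow> complex" where "c i t = (if fl i then (if t = 0 then 1 else 0)
       else (if t = 0 then 1/2 else (if bit j i then -1 else 1) / 2))" for i t
  define B :: "nat \<Rightarrow> nat \<Rightarrow> mat2" where "B i t = (if fl i then E2 (e i) (bit j i) (bit j' i)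
       else (if t = 0 then id2 else vB (e i)))" for i t
  define Good where "Good i = (if fl i then Vt (vB (e i)) else {id2, vB (e i)})" for i
  show ?thesis unfolding Et_def
  proof (rule tm_multilin[where T=T and c=c and B=B and Good=Good])
    show "finite (T i)" for i by (simp add: T_def)
    show "E2 (e i) (bit j i) (bit j' i) = (\<lambda>a b. \<Sum>t\<in>T i. c i t * B i t a b)" if i: "i < n" for i
    proof (cases "fl i")
      case True then show ?thesis by (simp add: T_def c_def B_def)
    next
      case False
      then have "bit j' i = bit j i" by (simp add: fl_def)
      then show ?thesis using False E2_diag[OF d[rule_format, OF i], of "bit j i"]
        by (simp add: T_def c_def B_def fun_eq_iff add_divide_distrib)
    qed
    show "B i t \<in> Good i" if "i < n" "t \<in> T i" for i t
      using that E2_off[OF d[rule_format, OF \<open>i < n\<close>]] by (auto simp: B_def Good_def fl_def)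
    show "tm n y \<in> cspan_m (G0 n (\<lambda>i. vB (e i)))" if y: "\<And>i. i < n \<Longrightarrow> y i \<in> Good i" for y
    proof -
      define I where "I = {i. i < n \<and> (fl i \<or> y i \<noteq> id2)}"
      have "tm n y = embed n I y" unfolding embed_tm
        by (rule tm_cong) (auto simp: I_def)
      moreover have "embed n I y \<in> G0 n (\<lambda>i. vB (e i))"
      proof -
        have "{i\<in>I. fl i} = {i. i < n \<and> fl i}" by (auto simp: I_def)
        then have "even (card {i\<in>I. fl i})" using ev by simp
        moreover have "\<forall>i\<in>I. y i \<in> (if fl i then Vt (vB (e i)) else Vl (vB (e i)))"
        proof
          fix i assume i: "i \<in> I"
          then have "i < n" by (simp add: I_def)
          show "y i \<in> (if fl i then Vt (vB (e i)) else Vl (vB (e i)))"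
          proof (cases "fl i")
            case True then show ?thesis using y[OF \<open>i < n\<close>] by (simp add: Good_def)
          next
            case False
            then have "y i = vB (e i)" using y[OF \<open>i < n\<close>] i by (auto simp: Good_def I_def)
            moreover have "vB (e i) \<in> Vl (vB (e i))" unfolding Vl_def
              by (rule CollectI, rule exI[of _ 1]) simp
            ultimately show ?thesis using False by simp
          qed
        qed
        moreover have "I \<subseteq> {..<n}" by (auto simp: I_def)
        ultimately show ?thesis unfolding G0_def by blast
      qed
      ultimately show ?thesis by (simp add: cspan_m_base)
    qed
  qed
qed

lemma embed_empty: "embed n {} x = idm (2^n)"
  unfolding embed_tm idm_tm by simp

lemma decomp: assumes v: "frame n v" and W: "\<rho> \<in> cspan_m (G0 n v)" and L: "\<rho> \<in> Lspace n"
  shows "\<exists>x\<in>XB n v. \<rho> = bloch n x"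
proof -
  obtain F c where F: "finite F" "F \<subseteq> G0 n v" "\<rho> = (\<lambda>r k. \<Sum>g\<in>F. c g * g r k)"
    using W unfolding cspan_m_def by blast
  define x where "x = (\<lambda>r k. \<Sum>g\<in>F \<inter> gens n v. c g * g r k)"
  have xB: "x \<in> XB n v" unfolding XB_gens cspan_m_def x_def using F(1)
    by (intro CollectI exI[of _ "F \<inter> gens n v"] exI[of _ c]) auto
  have F2: "F - gens n v \<subseteq> {idm (2^n)}"
  proof
    fix g assume g: "g \<in> F - gens n v"
    then have "g \<in> G0 n v" using F(2) by blast
    then obtain I y \<tau> where gI: "g = embed n I y" "I \<subseteq> {..<n}" and
      ev: "even (card {i\<in>I. \<tau> i})" and t: "\<forall>i\<in>I. y i \<in> (if \<tau> i then Vt (v i) else Vl (v i))"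
      unfolding G0_def by blast
    have "I = {}"
    proof (rule ccontr)
      assume ne: "I \<noteq> {}"
      have "g \<in> gens n v" unfolding gens_def
        by (rule CollectI, rule exI[of _ I], rule exI[of _ y], intro conjI exI[of _ \<tau>]) (use gI ne ev t in simp_all)
      then show False using g by blast
    qed
    then show "g \<in> {idm (2^n)}" using gI embed_empty by simp
  qed
  define \<alpha> where "\<alpha> = (if idm (2^n) \<in> F - gens n v then c (idm (2^n)) else 0)"
  have s2: "(\<Sum>g\<in>F - gens n v. c g * g r k) = \<alpha> * idm (2^n) r k" for r k
  proof (cases "idm (2^n) \<in> F - gens n v")
    case True
    then have e: "F - gens n v = {idm (2^n)}" using F2 by blast
    have "\<alpha> = c (idm (2^n))" using True unfolding \<alpha>_def by (simp only: if_True)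
    then show ?thesis unfolding e by simp
  next
    case False
    then have e: "F - gens n v = {}" using F2 by blast
    have "\<alpha> = 0" using False unfolding \<alpha>_def by (simp only: if_False)
    then show ?thesis unfolding e by simp
  qed
  have rho: "\<rho> = (\<lambda>r k. x r k + \<alpha> * idm (2^n) r k)"
  proof (intro ext)
    fix r k
    have "\<rho> r k = (\<Sum>g\<in>F \<inter> gens n v. c g * g r k) + (\<Sum>g\<in>F - gens n v. c g * g r k)"
      unfolding F(3) using F(1) by (simp add: sum.Int_Diff)
    then show "\<rho> r k = x r k + \<alpha> * idm (2^n) r k" unfolding x_def s2 .
  qed
  have "1 = ctrace (2^n) \<rho>" using L unfolding Lspace_def by simp
  also have "\<dots> = ctrace (2^n) x + \<alpha> * 2^n"
    unfolding rho ctrace_def by (simp add: sum.distrib sum_distrib_left[symmetric] idm_def)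
  also have "\<dots> = \<alpha> * 2^n" using XB_trace0[OF v xB] by simp
  finally have a: "\<alpha> = 1 / 2^n" by (simp add: field_simps)
  have "\<rho> = bloch n x" unfolding rho bloch_def a by (intro ext) simp
  then show ?thesis using xB by blast
qed

lemma B_main: assumes X: "Xstate n \<rho>" shows "\<rho> \<in> pi_image n"
proof -
  obtain e where L: "\<rho> \<in> Lspace n" and b: "\<forall>i<n. basis2 (e i)"
    and pres: "\<forall>p. \<forall>w \<in> cspan_v {btensor n e j | j. j < 2^n \<and> par n j = p}.
             mulv (2^n) \<rho> w \<in> cspan_v {btensor n e j | j. j < 2^n \<and> par n j = p}"
    using X unfolding Xstate_def by blast
  have d: "\<forall>i<n. det2 (e i) \<noteq> 0" using b by (simp add: basis2_det)
  define v where "v = (\<lambda>i. vB (e i))"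
  have fr: "frame n v" unfolding frame_def v_def using d vB_sl2 vB_form by simp
  have ir: "in_range (2^n) \<rho>" using L unfolding Lspace_def by simp
  define H where "H = (\<lambda>p. if par n (fst p) = par n (snd p) then Et n e (fst p) (snd p) else (\<lambda>_ _. 0))"
  have "\<rho> = (\<lambda>r c. \<Sum>j::nat<2^n. \<Sum>j'::nat<2^n. kap n e \<rho> j j' * Et n e j j' r c)"
    by (rule expand_rho[OF d ir])
  also have "\<dots> = (\<lambda>r c. \<Sum>j::nat<2^n. \<Sum>j'::nat<2^n. kap n e \<rho> j j' * H (j, j') r c)"
  proof (intro ext sum.cong refl)
    fix r c j j' assume j: "j \<in> {..<(2::nat)^n}" and j': "j' \<in> {..<(2::nat)^n}"
    show "kap n e \<rho> j j' * Et n e j j' r c = kap n e \<rho> j j' * H (j, j') r c"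
    proof (cases "par n j = par n j'")
      case True then show ?thesis by (simp add: H_def)
    next
      case False
      have "btensor n e j' \<in> cspan_v {btensor n e j'' | j''. j'' < 2^n \<and> par n j'' = par n j'}"
        using j' by (intro cspan_v_base) blast
      then have "mulv (2^n) \<rho> (btensor n e j') \<in> cspan_v {btensor n e j'' | j''. j'' < 2^n \<and> par n j'' = par n j'}"
        using pres by blast
      then have "kap n e \<rho> j j' = 0" using kap_zero[OF d _ _ False] j by simp
      then show ?thesis by simp
    qed
  qed
  also have "\<dots> = (\<lambda>r c. \<Sum>p\<in>{..<(2::nat)^n} \<times> {..<(2::nat)^n}. (case p of (j, j') \<Rightarrow> kap n e \<rho> j j') * H p r c)"
    by (intro ext) (simp add: sum.cartesian_product split_def)
  also have "\<dots> \<in> cspan_m (G0 n v)"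
  proof (rule cspan_m_sum)
    fix p assume "p \<in> {..<(2::nat)^n} \<times> {..<(2::nat)^n}"
    show "H p \<in> cspan_m (G0 n v)"
      unfolding H_def v_def using Et_in[OF d] cspan_m_zero by simp
  qed simp
  finally have "\<rho> \<in> cspan_m (G0 n v)" .
  then obtain x where "x \<in> XB n v" "\<rho> = bloch n x" using decomp[OF fr _ L] by blast
  then show ?thesis unfolding pi_image_def using fr by blast
qed

theorem lemma4p12:
  fixes n :: nat
  shows "vanishing_ideal (2^n) (pi_image n) = vanishing_ideal (2^n) {\<rho>. Xstate n \<rho>}"
proof -
  have "pi_image n = {\<rho>. Xstate n \<rho>}" using A_main B_main by blast
  then show ?thesis by simp
qed

end
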